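(* Let $d\geq 2$ and let $\varGamma$ be a lattice in $\mathbb{R}^d$ such that $\langle x,x\rangle\in\mathbb{Q}$ for all $x\in\varGamma$, where $\langle\cdot,\cdot\rangle$ is the standard scalar product on $\mathbb{R}^d$. If $d$ is even, then $\operatorname{SOS}(\varGamma)/\operatorname{SOC}(\varGamma)$ is an elementary Abelian $2$-group. If $d$ is odd, then $\operatorname{SOS}(\varGamma)=\operatorname{SOC}(\varGamma)$. In either case, $R^2\in\operatorname{SOC}(\varGamma)$ for every $R\in\operatorname{SOS}(\varGamma)$.
   Context: A lattice in $\mathbb{R}^d$ is a subgroup of the form $\mathbb{Z}b_1\oplus\cdots\oplus\mathbb{Z}b_d$ where $\{b_1,\dots,b_d\}$ is a basis of $\mathbb{R}^d$. Two lattices $\varGamma,\varGamma'$ are commensurate, written $\varGamma\sim\varGamma'$, if $\varGamma\cap\varGamma'$ has finite index both in $\varGamma$ and in $\varGamma'$. $\operatorname{SOC}(\varGamma)=\{R\in\operatorname{SO}(d):\varGamma\sim R\varGamma\}$ and $\operatorname{SOS}(\varGamma)=\{R\in\operatorname{SO}(d):\varGamma\sim\alpha R\varGamma\text{ for some }\alpha>0\}$; these are groups and $\operatorname{SOC}(\varGamma)$ is a normal subgroup of $\operatorname{SOS}(\varGamma)$. An elementary Abelian $2$-group is a direct sum of cyclic groups of order $2$ (possibly trivial). *)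

theory Defs
  imports "HOL-Analysis.Analysis" "HOL-Algebra.Coset"
begin

definition lattice_span :: "('n::finite \<Rightarrow> real^'n) \<Rightarrow> (real^'n) set" where
  "lattice_span b = range (\<lambda>k::'n \<Rightarrow> int. \<Sum>i\<in>UNIV. of_int (k i) *\<^sub>R b i)"

definition is_lattice :: "(real^'n::finite) set \<Rightarrow> bool" where
  "is_lattice L \<longleftrightarrow> (\<exists>b::'n \<Rightarrow> real^'n.
      inj b \<and> independent (range b) \<and> span (range b) = UNIV \<and> L = lattice_span b)"

definition finite_index :: "(real^'n::finite) set \<Rightarrow> (real^'n) set \<Rightarrow> bool" where
  "finite_index H G \<longleftrightarrow> finite ((\<lambda>g. (\<lambda>h. g + h) ` H) ` G)"

definition commensurate :: "(real^'n::finite) set \<Rightarrow> (real^'n) set \<Rightarrow> bool" where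
  "commensurate L L' \<longleftrightarrow> finite_index (L \<inter> L') L \<and> finite_index (L \<inter> L') L'"

definition SO :: "(real^'n^'n::finite) set" where
  "SO = {R. orthogonal_matrix R \<and> det R = 1}"

definition SOC :: "(real^'n::finite) set \<Rightarrow> (real^'n^'n) set" where
  "SOC L = {R \<in> SO. commensurate L ((\<lambda>x. R *v x) ` L)}"

definition SOS :: "(real^'n::finite) set \<Rightarrow> (real^'n^'n) set" where
  "SOS L = {R \<in> SO. \<exists>\<alpha>>0. commensurate L ((\<lambda>x. \<alpha> *\<^sub>R (R *v x)) ` L)}"

definition SOS_group :: "(real^'n::finite) set \<Rightarrow> (real^'n^'n) monoid" where
  "SOS_group L = \<lparr>carrier = SOS L, mult = (\<lambda>A B. A ** B), one = mat 1\<rparr>"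

text \<open>The direct sum of copies of the cyclic group of order 2 indexed by I:
  finitely supported boolean functions on I under pointwise xor.\<close>
definition C2_sum :: "'i set \<Rightarrow> ('i \<Rightarrow> bool) monoid" where
  "C2_sum I = \<lparr>carrier = {f. finite {i. f i} \<and> {i. f i} \<subseteq> I},
               mult = (\<lambda>f g i. f i \<noteq> g i), one = (\<lambda>_. False)\<rparr>"

text \<open>Elementary abelian 2-group: isomorphic to a direct sum of cyclic groups of order 2
  (the index set can be taken inside the carrier type, since a basis is at most as large
  as the group).\<close>
definition elementary_abelian_2 :: "('a, 'b) monoid_scheme \<Rightarrow> bool" where
  "elementary_abelian_2 G \<longleftrightarrow> group G \<and> (\<exists>I::'a set. G \<cong> C2_sum I)"

end

theory Submission
  imports Defs "HOL-Algebra.FiniteProduct"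
begin


lemma fin_xor: "finite {i. f i} \<Longrightarrow> finite {i. g i} \<Longrightarrow> finite {i. f i \<noteq> g i}"
  by (rule finite_subset[of _ "{i. f i} \<union> {i. g i}"]) auto

lemma fin_xor': "finite {i. f i} \<Longrightarrow> finite {i. g i} \<Longrightarrow> finite {i. f i = (\<not> g i)}"
  by (rule finite_subset[of _ "{i. f i} \<union> {i. g i}"]) auto

lemma C2_sum_group: "group (C2_sum I)"
proof (rule groupI)
  fix x y assume "x \<in> carrier (C2_sum I)" "y \<in> carrier (C2_sum I)"
  then show "x \<otimes>\<^bsub>C2_sum I\<^esub> y \<in> carrier (C2_sum I)"
    unfolding C2_sum_def by (auto intro: fin_xor')
next
  fix x assume "x \<in> carrier (C2_sum I)"
  then show "\<exists>y\<in>carrier (C2_sum I). y \<otimes>\<^bsub>C2_sum I\<^esub> x = \<one>\<^bsub>C2_sum I\<^esub>"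
    by (intro bexI[of _ x]) (auto simp: C2_sum_def)
qed (auto simp: C2_sum_def)

lemma elab2_aux:
  fixes G (structure)
  assumes grp: "group G" and sq: "\<forall>x\<in>carrier G. x \<otimes>\<^bsub>G\<^esub> x = \<one>\<^bsub>G\<^esub>"
  shows "\<exists>I. I \<subseteq> carrier G \<and> G \<cong> C2_sum I"
proof -
  interpret group G by (rule grp)
  have inv: "inv x = x" if "x \<in> carrier G" for x
    using sq that by (intro inv_equality) auto
  interpret comm_group G
  proof (intro group_comm_groupI)
    fix x y assume xy: "x \<in> carrier G" "y \<in> carrier G"
    have "x \<otimes> y = inv (x \<otimes> y)" using inv xy by simp
    also have "\<dots> = inv y \<otimes> inv x" using xy by (simp add: inv_mult_group)
    also have "\<dots> = y \<otimes> x" using inv xy by simp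
    finally show "x \<otimes> y = y \<otimes> x" .
  qed
  define fp where "fp F = finprod G id F" for F
  have fpc: "fp F \<in> carrier G" if "F \<subseteq> carrier G" for F
    unfolding fp_def using that by (intro finprod_closed) auto
  have sd: "fp ((A - B) \<union> (B - A)) = fp A \<otimes> fp B"
    if "finite A" "finite B" "A \<subseteq> carrier G" "B \<subseteq> carrier G" for A B
  proof -
    have A: "A = (A - B) \<union> (A \<inter> B)" and B: "B = (B - A) \<union> (A \<inter> B)" by auto
    have fA: "fp A = fp (A - B) \<otimes> fp (A \<inter> B)"
      unfolding fp_def using that by (subst A, intro finprod_Un_disjoint) auto
    have fB: "fp B = fp (B - A) \<otimes> fp (A \<inter> B)"
      unfolding fp_def using that by (subst B, intro finprod_Un_disjoint) auto
    have fU: "fp ((A - B) \<union> (B - A)) = fp (A - B) \<otimes> fp (B - A)"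
      unfolding fp_def using that by (intro finprod_Un_disjoint) auto
    have c: "fp (A - B) \<in> carrier G" "fp (B - A) \<in> carrier G" "fp (A \<inter> B) \<in> carrier G"
      using that by (auto intro!: fpc)
    have "fp A \<otimes> fp B = (fp (A - B) \<otimes> fp (B - A)) \<otimes> (fp (A \<inter> B) \<otimes> fp (A \<inter> B))"
      unfolding fA fB using c by (simp add: m_ac)
    also have "\<dots> = fp (A - B) \<otimes> fp (B - A)" using sq c by simp
    finally show ?thesis using fU by simp
  qed
  define indep where "indep S \<longleftrightarrow> S \<subseteq> carrier G \<and>
      (\<forall>F. finite F \<and> F \<subseteq> S \<and> fp F = \<one> \<longrightarrow> F = {})" for S
  have "\<exists>M\<in>{S. indep S}. \<forall>X\<in>{S. indep S}. M \<subseteq> X \<longrightarrow> X = M"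
  proof (rule Zorn_Lemma, intro ballI)
    fix C assume C: "C \<in> chains {S. indep S}"
    show "\<Union>C \<in> {S. indep S}"
    proof (cases "C = {}")
      case True thus ?thesis by (simp add: indep_def)
    next
      case False
      have ch: "subset.chain {S. indep S} C" using C by (simp add: chains_alt_def)
      show ?thesis unfolding mem_Collect_eq indep_def
      proof (intro conjI allI impI)
        show "\<Union>C \<subseteq> carrier G" using C by (auto simp: chains_def chain_subset_def indep_def)
        fix F assume F: "finite F \<and> F \<subseteq> \<Union>C \<and> fp F = \<one>"
        then obtain B where "B \<in> C" "F \<subseteq> B"
          using finite_subset_Union_chain[OF _ _ False ch] by metis
        then show "F = {}" using F C by (auto simp: chains_def chain_subset_def indep_def)
      qed
    qed
  qed
  then obtain M where M: "indep M" and maxM: "\<And>X. indep X \<Longrightarrow> M \<subseteq> X \<Longrightarrow> X = M" by auto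
  have MG: "M \<subseteq> carrier G" using M by (simp add: indep_def)
  have span: "\<exists>F. finite F \<and> F \<subseteq> M \<and> fp F = g" if g: "g \<in> carrier G" for g
  proof (rule ccontr)
    assume nsp: "\<not> ?thesis"
    have gM: "g \<notin> M"
    proof
      assume "g \<in> M"
      then have "finite {g} \<and> {g} \<subseteq> M \<and> fp {g} = g" using g by (simp add: fp_def)
      then show False using nsp by blast
    qed
    have "indep (insert g M)" unfolding indep_def
    proof (intro conjI allI impI)
      show "insert g M \<subseteq> carrier G" using g MG by auto
      fix F assume F: "finite F \<and> F \<subseteq> insert g M \<and> fp F = \<one>"
      show "F = {}"
      proof (cases "g \<in> F")
        case True
        have FG: "F - {g} \<subseteq> carrier G" using F MG by auto
        have "fp F = g \<otimes> fp (F - {g})"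
        proof -
          have "F = insert g (F - {g})" using True by auto
          then have "fp F = fp (insert g (F - {g}))" by simp
          also have "\<dots> = g \<otimes> fp (F - {g})"
            unfolding fp_def using F g FG by (subst finprod_insert) auto
          finally show ?thesis .
        qed
        then have "g \<otimes> fp (F - {g}) = g \<otimes> g" using F sq g by simp
        then have "fp (F - {g}) = g" using g fpc[OF FG] by simp
        moreover have "finite (F - {g}) \<and> F - {g} \<subseteq> M" using F by auto
        ultimately show ?thesis using nsp by blast
      next
        case False
        then have "F \<subseteq> M" using F by auto
        then show ?thesis using M F by (auto simp: indep_def)
      qed
    qed
    then have "insert g M = M" using maxM by auto
    then show False using gM by auto
  qed
  define h where "h f = fp {i. f i}" for f :: "'a \<Rightarrow> bool"
  have hc: "h f \<in> carrier G" if "f \<in> carrier (C2_sum M)" for f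
    using that MG unfolding h_def C2_sum_def by (intro fpc) auto
  have hm: "h (f \<otimes>\<^bsub>C2_sum M\<^esub> g) = h f \<otimes> h g"
    if "f \<in> carrier (C2_sum M)" "g \<in> carrier (C2_sum M)" for f g
  proof -
    have e: "{i. f i \<noteq> g i} = ({i. f i} - {i. g i}) \<union> ({i. g i} - {i. f i})" by auto
    have "h (f \<otimes>\<^bsub>C2_sum M\<^esub> g) = fp {i. f i \<noteq> g i}"
      by (simp add: h_def C2_sum_def)
    also have "\<dots> = fp (({i. f i} - {i. g i}) \<union> ({i. g i} - {i. f i}))" by (simp only: e)
    also have "\<dots> = h f \<otimes> h g" unfolding h_def
      using that MG by (intro sd) (auto simp: C2_sum_def)
    finally show ?thesis .
  qed
  have hom: "h \<in> hom (C2_sum M) G"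
    by (intro homI hc hm)
  have inj: "inj_on h (carrier (C2_sum M))"
  proof (rule inj_onI)
    fix f g assume f: "f \<in> carrier (C2_sum M)" and g: "g \<in> carrier (C2_sum M)" and e: "h f = h g"
    have "h (f \<otimes>\<^bsub>C2_sum M\<^esub> g) = \<one>" using hm[OF f g] e sq hc[OF g] by simp
    moreover have "finite {i. f i \<noteq> g i}"
      using f g by (intro fin_xor) (auto simp: C2_sum_def)
    moreover have "{i. f i \<noteq> g i} \<subseteq> M"
      using f g by (auto simp: C2_sum_def)
    moreover have "h (f \<otimes>\<^bsub>C2_sum M\<^esub> g) = fp {i. f i \<noteq> g i}"
      by (simp add: h_def C2_sum_def)
    ultimately have "{i. f i \<noteq> g i} = {}" using M unfolding indep_def by metis
    then show "f = g" by auto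
  qed
  have surj: "h ` carrier (C2_sum M) = carrier G"
  proof
    show "h ` carrier (C2_sum M) \<subseteq> carrier G" using hc by auto
    show "carrier G \<subseteq> h ` carrier (C2_sum M)"
    proof
      fix x assume "x \<in> carrier G"
      then obtain F where F: "finite F" "F \<subseteq> M" "fp F = x" using span by blast
      then have "(\<lambda>i. i \<in> F) \<in> carrier (C2_sum M)" by (simp add: C2_sum_def)
      moreover have "h (\<lambda>i. i \<in> F) = x" using F by (simp add: h_def)
      ultimately show "x \<in> h ` carrier (C2_sum M)" by blast
    qed
  qed
  have "h \<in> iso (C2_sum M) G" using hom inj surj by (simp add: iso_iff)
  then have "C2_sum M \<cong> G" by (rule is_isoI)
  then have "G \<cong> C2_sum M" using group.iso_sym[OF C2_sum_group] by blast
  then show ?thesis using MG by blast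
qed




definition zmod :: "(real^'n::finite) set \<Rightarrow> bool" where
  "zmod L \<longleftrightarrow> 0 \<in> L \<and> (\<forall>x\<in>L. \<forall>y\<in>L. x + y \<in> L) \<and> (\<forall>x\<in>L. \<forall>m::int. of_int m *\<^sub>R x \<in> L)"

definition Qs :: "(real^'n::finite) set \<Rightarrow> (real^'n) set" where
  "Qs L = {x. \<exists>n::nat. n > 0 \<and> real n *\<^sub>R x \<in> L}"

lemma zmodD:
  assumes "zmod L"
  shows "0 \<in> L" "x \<in> L \<Longrightarrow> y \<in> L \<Longrightarrow> x + y \<in> L" "x \<in> L \<Longrightarrow> of_int m *\<^sub>R x \<in> L"
  using assms by (auto simp: zmod_def)

lemma zmod_nat: "zmod L \<Longrightarrow> x \<in> L \<Longrightarrow> real n *\<^sub>R x \<in> L"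
  using zmodD(3)[of L x "int n"] by simp

lemma zmod_neg: "zmod L \<Longrightarrow> x \<in> L \<Longrightarrow> - x \<in> L"
  using zmodD(3)[of L x "-1"] by simp

lemma zmod_diff: "zmod L \<Longrightarrow> x \<in> L \<Longrightarrow> y \<in> L \<Longrightarrow> x - y \<in> L"
  using zmodD(2)[of L x "-y"] zmod_neg[of L y] by simp

lemma zmod_sum: "zmod L \<Longrightarrow> (\<And>i. i \<in> A \<Longrightarrow> f i \<in> L) \<Longrightarrow> sum f A \<in> L"
  by (induction A rule: infinite_finite_induct) (auto simp: zmodD)

lemma zmod_Int: "zmod L \<Longrightarrow> zmod L' \<Longrightarrow> zmod (L \<inter> L')"
  by (auto simp: zmod_def)

lemma zmod_lattice_span: "zmod (lattice_span c)"
  unfolding zmod_def lattice_span_def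
proof (intro conjI ballI allI)
  show "0 \<in> range (\<lambda>k. \<Sum>i\<in>UNIV. real_of_int (k i) *\<^sub>R c i)"
    by (rule range_eqI[of _ _ "\<lambda>_. 0"]) simp
next
  fix x y assume "x \<in> range (\<lambda>k. \<Sum>i\<in>UNIV. real_of_int (k i) *\<^sub>R c i)"
    "y \<in> range (\<lambda>k. \<Sum>i\<in>UNIV. real_of_int (k i) *\<^sub>R c i)"
  then obtain k k' where "x = (\<Sum>i\<in>UNIV. real_of_int (k i) *\<^sub>R c i)"
    "y = (\<Sum>i\<in>UNIV. real_of_int (k' i) *\<^sub>R c i)" by auto
  then show "x + y \<in> range (\<lambda>k. \<Sum>i\<in>UNIV. real_of_int (k i) *\<^sub>R c i)"
    by (intro range_eqI[of _ _ "\<lambda>i. k i + k' i"]) (simp add: sum.distrib scaleR_add_left)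
next
  fix x and m :: int assume "x \<in> range (\<lambda>k. \<Sum>i\<in>UNIV. real_of_int (k i) *\<^sub>R c i)"
  then obtain k where "x = (\<Sum>i\<in>UNIV. real_of_int (k i) *\<^sub>R c i)" by auto
  then show "of_int m *\<^sub>R x \<in> range (\<lambda>k. \<Sum>i\<in>UNIV. real_of_int (k i) *\<^sub>R c i)"
    by (intro range_eqI[of _ _ "\<lambda>i. m * k i"]) (simp add: scaleR_sum_right)
qed

lemma lattice_span_mem: "c i \<in> lattice_span c"
  unfolding lattice_span_def
proof (rule range_eqI[of _ _ "\<lambda>j. if j = i then 1 else 0"])
  have "\<And>j. real_of_int (if j = i then 1 else 0) *\<^sub>R c j = (if j = i then c j else 0)" by simp
  then show "c i = (\<Sum>j\<in>UNIV. real_of_int (if j = i then 1 else 0) *\<^sub>R c j)"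
    by (simp add: sum.delta)
qed

lemma lattice_span_image:
  assumes "linear f"
  shows "f ` lattice_span c = lattice_span (f \<circ> c)"
  unfolding lattice_span_def image_image
  using assms by (simp add: linear_sum linear_scale o_def)

lemma Qs_sub: "zmod L \<Longrightarrow> L \<subseteq> Qs L"
  unfolding Qs_def by (auto intro!: exI[of _ 1])

lemma Qs_mono: "L \<subseteq> L' \<Longrightarrow> Qs L \<subseteq> Qs L'"
  unfolding Qs_def by auto

lemma Qs_Qs: "Qs (Qs L) = Qs L"
proof
  show "Qs (Qs L) \<subseteq> Qs L"
  proof
    fix x assume "x \<in> Qs (Qs L)"
    then obtain n m :: nat where "n > 0" "m > 0" "real m *\<^sub>R (real n *\<^sub>R x) \<in> L"
      unfolding Qs_def by auto
    then show "x \<in> Qs L" unfolding Qs_def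
      by (intro CollectI exI[of _ "m * n"]) simp
  qed
  show "Qs L \<subseteq> Qs (Qs L)"
  proof
    fix x assume "x \<in> Qs L"
    then show "x \<in> Qs (Qs L)" unfolding Qs_def[of "Qs L"] mem_Collect_eq
      by (intro exI[of _ "1::nat"]) simp
  qed
qed

lemma Qs_scale:
  assumes "zmod L" "x \<in> Qs L" "q \<in> \<rat>"
  shows "q *\<^sub>R x \<in> Qs L"
proof -
  obtain n :: nat where n: "n > 0" "real n *\<^sub>R x \<in> L" using assms(2) unfolding Qs_def by auto
  obtain a b :: int where ab: "b > 0" "q = of_int a / of_int b" using assms(3) by (rule Rats_cases')
  have "real (n * nat b) *\<^sub>R (q *\<^sub>R x) = of_int a *\<^sub>R (real n *\<^sub>R x)"
    using ab by (simp add: field_simps)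
  also have "\<dots> \<in> L" using zmodD(3)[OF assms(1) n(2)] .
  finally show ?thesis unfolding Qs_def using n ab by (intro CollectI exI[of _ "n * nat b"]) simp
qed

lemma Qs_zmod:
  assumes "zmod L" shows "zmod (Qs L)"
  unfolding zmod_def
proof (intro conjI ballI allI)
  show "0 \<in> Qs L" using Qs_sub[OF assms] zmodD(1)[OF assms] by auto
  fix x y assume "x \<in> Qs L" "y \<in> Qs L"
  then obtain n m :: nat where nm: "n > 0" "m > 0" "real n *\<^sub>R x \<in> L" "real m *\<^sub>R y \<in> L"
    unfolding Qs_def by auto
  have "real (n * m) *\<^sub>R (x + y) = real m *\<^sub>R (real n *\<^sub>R x) + real n *\<^sub>R (real m *\<^sub>R y)"
    by (simp add: algebra_simps)
  also have "\<dots> \<in> L" using zmodD(2)[OF assms zmod_nat[OF assms nm(3)] zmod_nat[OF assms nm(4)]] .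
  finally show "x + y \<in> Qs L" unfolding Qs_def using nm by (intro CollectI exI[of _ "n * m"]) simp
next
  fix x and m :: int assume "x \<in> Qs L"
  then show "of_int m *\<^sub>R x \<in> Qs L" using Qs_scale[OF assms] by simp
qed

lemma Qs_Int: "zmod L' \<Longrightarrow> Qs L \<inter> L' \<subseteq> Qs (L \<inter> L')"
  unfolding Qs_def by (auto intro: zmod_nat)

lemma Qs_image:
  assumes "linear f" "inj f"
  shows "Qs (f ` L) = f ` Qs L"
proof
  show "Qs (f ` L) \<subseteq> f ` Qs L"
  proof
    fix x assume "x \<in> Qs (f ` L)"
    then obtain n :: nat and y where n: "n > 0" "real n *\<^sub>R x = f y" "y \<in> L" unfolding Qs_def by auto
    have "f ((1 / real n) *\<^sub>R y) = (1 / real n) *\<^sub>R f y" using assms(1) by (simp add: linear_scale)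
    also have "\<dots> = (1 / real n) *\<^sub>R (real n *\<^sub>R x)" using n(2) by simp
    also have "\<dots> = ((1 / real n) * real n) *\<^sub>R x" by (rule scaleR_scaleR)
    also have "(1 / real n) * real n = 1" using n(1) by simp
    finally have "f ((1 / real n) *\<^sub>R y) = x" by simp
    moreover have "(1 / real n) *\<^sub>R y \<in> Qs L" unfolding Qs_def using n by (intro CollectI exI[of _ n]) simp
    ultimately show "x \<in> f ` Qs L" by blast
  qed
  show "f ` Qs L \<subseteq> Qs (f ` L)"
  proof
    fix x assume "x \<in> f ` Qs L"
    then obtain z n where z: "x = f z" "n > (0::nat)" "real n *\<^sub>R z \<in> L" unfolding Qs_def by auto
    have "real n *\<^sub>R x = f (real n *\<^sub>R z)" using z(1) linear_scale[OF assms(1)] by simp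
    then show "x \<in> Qs (f ` L)" unfolding Qs_def using z by (intro CollectI exI[of _ n]) auto
  qed
qed

lemma zmod_image:
  assumes f: "linear f" and L: "zmod L" shows "zmod (f ` L)"
  unfolding zmod_def
proof (intro conjI ballI allI)
  show "0 \<in> f ` L" using zmodD(1)[OF L] linear_0[OF f] by (metis image_eqI)
  fix x y assume "x \<in> f ` L" "y \<in> f ` L"
  then obtain u v where "u \<in> L" "v \<in> L" "x = f u" "y = f v" by auto
  then show "x + y \<in> f ` L" using zmodD(2)[OF L] linear_add[OF f] by (metis image_eqI)
next
  fix x and m :: int assume "x \<in> f ` L"
  then obtain u where "u \<in> L" "x = f u" by auto
  then show "of_int m *\<^sub>R x \<in> f ` L" using zmodD(3)[OF L] linear_scale[OF f] by (metis image_eqI)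
qed




lemma fi_Qs:
  assumes L: "zmod L" and L': "zmod L'" and fi: "finite_index (L \<inter> L') L'"
  shows "L' \<subseteq> Qs L"
proof
  fix y assume y: "y \<in> L'"
  define H where "H = L \<inter> L'"
  define g where "g k = (\<lambda>h. real k *\<^sub>R y + h) ` H" for k :: nat
  have "range g \<subseteq> (\<lambda>g. (\<lambda>h. g + h) ` H) ` L'"
    using zmod_nat[OF L' y] by (auto simp: g_def)
  then have "finite (range g)" using fi finite_subset unfolding finite_index_def H_def by blast
  then have "\<not> inj g" using finite_imageD infinite_UNIV_nat by blast
  then obtain j k where jk: "g j = g k" "j \<noteq> k" unfolding inj_def by blast
  then obtain j k where jk: "g j = g k" "j < k" by (metis linorder_neq_iff)
  have "real k *\<^sub>R y \<in> g k" unfolding g_def H_def using zmodD(1)[OF L] zmodD(1)[OF L']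
    by (intro image_eqI[of _ _ 0]) auto
  then have "real k *\<^sub>R y \<in> g j" using jk by simp
  then obtain h where h: "h \<in> H" "real k *\<^sub>R y = real j *\<^sub>R y + h" unfolding g_def by auto
  have "h = (real k - real j) *\<^sub>R y" using h(2) by (simp add: scaleR_diff_left)
  also have "real k - real j = real (k - j)" using jk by simp
  finally have "real (k - j) *\<^sub>R y \<in> L" using h(1) H_def by simp
  then show "y \<in> Qs L" unfolding Qs_def using jk by (intro CollectI exI[of _ "k - j"]) simp
qed

lemma common_mult:
  assumes H: "zmod H" and c: "\<forall>i. c i \<in> Qs H"
  shows "\<exists>N::nat. N > 0 \<and> (\<forall>x\<in>lattice_span c. real N *\<^sub>R x \<in> H)"
proof -
  have "\<forall>i. \<exists>n::nat. n > 0 \<and> real n *\<^sub>R c i \<in> H" using c unfolding Qs_def by auto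
  then obtain n where n: "\<And>i. n i > (0::nat)" "\<And>i. real (n i) *\<^sub>R c i \<in> H" by metis
  define N where "N = prod n UNIV"
  have Npos: "N > 0" unfolding N_def using n(1) by (simp add: prod_pos)
  have Nc: "real N *\<^sub>R c i \<in> H" for i
  proof -
    have "N = n i * prod n (UNIV - {i})" unfolding N_def by (simp add: prod.remove)
    then have "real N *\<^sub>R c i = real (prod n (UNIV - {i})) *\<^sub>R (real (n i) *\<^sub>R c i)" by simp
    also have "\<dots> \<in> H" by (rule zmod_nat[OF H n(2)])
    finally show ?thesis .
  qed
  have "real N *\<^sub>R x \<in> H" if xin: "x \<in> lattice_span c" for x
  proof -
    obtain k where "x = (\<Sum>i\<in>UNIV. of_int (k i) *\<^sub>R c i)" using xin unfolding lattice_span_def by blast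
    then have "real N *\<^sub>R x = (\<Sum>i\<in>UNIV. of_int (k i) *\<^sub>R (real N *\<^sub>R c i))"
      by (simp add: scaleR_sum_right mult.commute)
    also have "\<dots> \<in> H" by (intro zmod_sum[OF H] zmodD(3)[OF H] Nc)
    finally show ?thesis .
  qed
  then show ?thesis using Npos by blast
qed

lemma coset_eq:
  assumes H: "zmod H" and d: "a - b \<in> H"
  shows "(\<lambda>h. a + h) ` H = (\<lambda>h. b + h) ` H"
proof -
  have 1: "(\<lambda>h. a + h) ` H \<subseteq> (\<lambda>h. b + h) ` H" if "a - b \<in> H" for a b
  proof
    fix x assume "x \<in> (\<lambda>h. a + h) ` H"
    then obtain h where h: "h \<in> H" "x = a + h" by auto
    then have "x = b + ((a - b) + h)" by simp
    moreover have "(a - b) + h \<in> H" using zmodD(2)[OF H that h(1)] .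
    ultimately show "x \<in> (\<lambda>h. b + h) ` H" by blast
  qed
  have "b - a \<in> H" using zmod_neg[OF H d] by simp
  then show ?thesis using 1[OF d] 1[of b a] by blast
qed

lemma fi_from_mult:
  assumes H: "zmod H" and N: "N > (0::nat)" and mult: "\<forall>x\<in>lattice_span c. real N *\<^sub>R x \<in> H"
  shows "finite_index H (lattice_span c)"
proof -
  define S where "S k = (\<Sum>i\<in>UNIV. of_int (k i) *\<^sub>R c i)" for k :: "'a \<Rightarrow> int"
  define cos where "cos g = (\<lambda>h. g + h) ` H" for g
  have eq: "cos (S k) = cos (S (\<lambda>i. k i mod int N))" for k
  proof -
    have "S k - S (\<lambda>i. k i mod int N) = (\<Sum>i\<in>UNIV. of_int (k i - k i mod int N) *\<^sub>R c i)"
      unfolding S_def by (simp add: sum_subtractf scaleR_diff_left)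
    also have "\<dots> = (\<Sum>i\<in>UNIV. of_int (int N * (k i div int N)) *\<^sub>R c i)"
      by (simp add: minus_mod_eq_mult_div)
    also have "\<dots> = real N *\<^sub>R S (\<lambda>i. k i div int N)"
      unfolding S_def by (simp add: scaleR_sum_right)
    also have "\<dots> \<in> H" using mult unfolding lattice_span_def S_def by auto
    finally show ?thesis unfolding cos_def by (rule coset_eq[OF H])
  qed
  have "(\<lambda>g. (\<lambda>h. g + h) ` H) ` lattice_span c = (\<lambda>k. cos (S k)) ` UNIV"
    unfolding lattice_span_def cos_def S_def by auto
  also have "\<dots> \<subseteq> (\<lambda>k. cos (S k)) ` (PiE UNIV (\<lambda>_. {0..<int N}))"
  proof
    fix x assume "x \<in> (\<lambda>k. cos (S k)) ` UNIV"
    then obtain k where "x = cos (S k)" by auto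
    then have "x = cos (S (\<lambda>i. k i mod int N))" using eq by simp
    moreover have "(\<lambda>i. k i mod int N) \<in> PiE UNIV (\<lambda>_. {0..<int N})"
      using N by (simp add: PiE_UNIV_domain)
    ultimately show "x \<in> (\<lambda>k. cos (S k)) ` (PiE UNIV (\<lambda>_. {0..<int N}))" by blast
  qed
  finally show ?thesis unfolding finite_index_def
    by (rule finite_subset) (auto intro!: finite_imageI finite_PiE)
qed

lemma comm_char:
  assumes G: "\<Gamma> = lattice_span b" and f: "linear f" "inj f"
  shows "commensurate \<Gamma> (f ` \<Gamma>) \<longleftrightarrow> f ` Qs \<Gamma> = Qs \<Gamma>"
proof -
  define L' where "L' = f ` \<Gamma>"
  have zG: "zmod \<Gamma>" using G zmod_lattice_span by simp
  have L'eq: "L' = lattice_span (f \<circ> b)" using G lattice_span_image[OF f(1)] L'_def by simp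
  have zL: "zmod L'" using L'eq zmod_lattice_span by simp
  have QL: "Qs L' = f ` Qs \<Gamma>" unfolding L'_def by (rule Qs_image[OF f])
  show ?thesis
  proof
    assume c: "commensurate \<Gamma> (f ` \<Gamma>)"
    have A1: "L' \<subseteq> Qs \<Gamma>" using c fi_Qs[OF zG zL] unfolding commensurate_def L'_def by blast
    have A2: "\<Gamma> \<subseteq> Qs L'" using c fi_Qs[OF zL zG] unfolding commensurate_def L'_def by (simp add: Int_commute)
    have "f ` Qs \<Gamma> \<subseteq> Qs \<Gamma>" using Qs_mono[OF A1] QL Qs_Qs by metis
    moreover have "Qs \<Gamma> \<subseteq> f ` Qs \<Gamma>" using Qs_mono[OF A2] QL Qs_Qs by metis
    ultimately show "f ` Qs \<Gamma> = Qs \<Gamma>" by blast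
  next
    assume e: "f ` Qs \<Gamma> = Qs \<Gamma>"
    have zH: "zmod (\<Gamma> \<inter> L')" by (rule zmod_Int[OF zG zL])
    have "finite_index (\<Gamma> \<inter> L') L'"
    proof -
      have "\<forall>i. (f \<circ> b) i \<in> Qs (\<Gamma> \<inter> L')"
      proof
        fix i
        have bi: "b i \<in> \<Gamma>" using G lattice_span_mem by simp
        have "(f \<circ> b) i \<in> L'" using bi L'_def by simp
        moreover have "(f \<circ> b) i \<in> Qs \<Gamma>" using bi Qs_sub[OF zG] e by auto
        ultimately show "(f \<circ> b) i \<in> Qs (\<Gamma> \<inter> L')" using Qs_Int[OF zL] by blast
      qed
      then obtain N where "N > 0" "\<forall>x\<in>L'. real N *\<^sub>R x \<in> \<Gamma> \<inter> L'"
        using common_mult[OF zH] L'eq by metis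
      then show ?thesis using fi_from_mult[OF zH] L'eq by metis
    qed
    moreover have "finite_index (\<Gamma> \<inter> L') \<Gamma>"
    proof -
      have "\<forall>i. b i \<in> Qs (\<Gamma> \<inter> L')"
      proof
        fix i
        have bi: "b i \<in> \<Gamma>" using G lattice_span_mem by simp
        moreover have "b i \<in> Qs L'" using bi Qs_sub[OF zG] e QL by auto
        ultimately show "b i \<in> Qs (\<Gamma> \<inter> L')" using Qs_Int[OF zG, of L'] by (auto simp: Int_commute)
      qed
      then obtain N where "N > 0" "\<forall>x\<in>\<Gamma>. real N *\<^sub>R x \<in> \<Gamma> \<inter> L'"
        using common_mult[OF zH] G by metis
      then show ?thesis using fi_from_mult[OF zH] G by metis
    qed
    ultimately show "commensurate \<Gamma> (f ` \<Gamma>)" unfolding commensurate_def L'_def by blast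
  qed
qed




definition Tm :: "real \<Rightarrow> real^'n^'n \<Rightarrow> real^'n::finite \<Rightarrow> real^'n" where
  "Tm a R = (\<lambda>x. a *\<^sub>R (R *v x))"

lemma Tm_eq: "Tm a R = (*v) (a *\<^sub>R R)"
  by (rule ext) (simp add: Tm_def scaleR_matrix_vector_assoc)

lemma Tm_linear: "linear (Tm a R)"
  unfolding Tm_eq by (rule matrix_vector_mul_linear)

lemma Tm_comp: "Tm a R (Tm b S x) = Tm (a * b) (R ** S) x"
  by (simp add: Tm_def matrix_vector_mult_scaleR matrix_vector_mul_assoc)

lemma Tm_id: "Tm 1 (mat 1) x = x"
  by (simp add: Tm_def)

lemma SO_transpose: "R \<in> SO \<Longrightarrow> transpose R ** R = mat 1"
  by (simp add: SO_def orthogonal_matrix)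

lemma SO_transpose2: "R \<in> SO \<Longrightarrow> R ** transpose R = mat 1"
  by (simp add: SO_def orthogonal_matrix_def)

lemma SO_mul: "R \<in> SO \<Longrightarrow> S \<in> SO \<Longrightarrow> R ** S \<in> SO"
  by (simp add: SO_def orthogonal_matrix_mul det_mul)

lemma SO_tr: "R \<in> SO \<Longrightarrow> transpose R \<in> SO"
  by (simp add: SO_def orthogonal_matrix_transpose det_transpose)

lemma SO_one: "mat 1 \<in> SO"
  by (simp add: SO_def orthogonal_matrix_id det_I)

lemma Tm_inv: "R \<in> SO \<Longrightarrow> a \<noteq> 0 \<Longrightarrow> Tm (1 / a) (transpose R) (Tm a R x) = x"
  by (simp add: Tm_comp SO_transpose Tm_id)

lemma Tm_inj: "R \<in> SO \<Longrightarrow> a \<noteq> 0 \<Longrightarrow> inj (Tm a R)"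
  by (metis Tm_inv injI)

lemma img_comp: "f ` V = V \<Longrightarrow> g ` V = V \<Longrightarrow> (\<lambda>x. f (g x)) ` V = V"
  by (simp add: image_image[symmetric])
lemma img_inv: assumes "f ` V = V" "\<And>x. g (f x) = x" shows "g ` V = V"
proof -
  have "g ` V = g ` (f ` V)" using assms(1) by simp
  also have "\<dots> = V" by (simp add: image_image assms(2))
  finally show ?thesis .
qed
lemma orth_dot: fixes R :: "real^'n^'n::finite" assumes "orthogonal_matrix R" shows "(R *v x) \<bullet> (R *v y) = x \<bullet> y"
proof -
  have "orthogonal_transformation ((*v) R)"
    using assms orthogonal_transformation_matrix[of "(*v) R"] matrix_vector_mul_linear[of R]
    by simp
  then show ?thesis unfolding orthogonal_transformation_def by blast
qed

lemma det_scaleR: "det (c *\<^sub>R (A :: real^'n^'n::finite)) = c ^ CARD('n) * det A"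
proof -
  have "\<And>p. (\<Prod>i\<in>UNIV. (c *\<^sub>R A) $ i $ p i) = c ^ CARD('n) * (\<Prod>i\<in>UNIV. A $ i $ p i)"
    by (simp add: prod.distrib)
  then show ?thesis unfolding det_def by (simp add: sum_distrib_left mult_ac)
qed

lemma det_Rats: "(\<And>i j. M $ i $ j \<in> \<rat>) \<Longrightarrow> det (M :: real^'n^'n::finite) \<in> \<rat>"
  unfolding det_def by (intro Rats_sum Rats_mult Rats_prod) auto




locale latt =
  fixes b :: "'n::finite \<Rightarrow> real^'n" and \<Gamma> :: "(real^'n) set"
  assumes G: "\<Gamma> = lattice_span b" and indep: "independent (range b)"
    and spn: "span (range b) = UNIV" and rat: "\<forall>x\<in>\<Gamma>. x \<bullet> x \<in> \<rat>"
begin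

abbreviation "V \<equiv> Qs \<Gamma>"

lemma zG: "zmod \<Gamma>" using G zmod_lattice_span by simp

lemma key: "R \<in> SO \<Longrightarrow> a > 0 \<Longrightarrow> commensurate \<Gamma> (Tm a R ` \<Gamma>) \<longleftrightarrow> Tm a R ` V = V"
  by (rule comm_char[OF G Tm_linear Tm_inj]) auto

lemma SOC_char: "R \<in> SOC \<Gamma> \<longleftrightarrow> R \<in> SO \<and> Tm 1 R ` V = V"
proof -
  have "(\<lambda>x. R *v x) = Tm 1 R" by (simp add: Tm_def)
  then show ?thesis unfolding SOC_def using key[of R 1] by auto
qed

lemma SOS_char: "R \<in> SOS \<Gamma> \<longleftrightarrow> R \<in> SO \<and> (\<exists>a>0. Tm a R ` V = V)"
proof -
  have e: "\<And>a. (\<lambda>x. a *\<^sub>R (R *v x)) = Tm a R" by (simp add: Tm_def)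
  have "R \<in> SOS \<Gamma> \<longleftrightarrow> R \<in> SO \<and> (\<exists>a>0. commensurate \<Gamma> (Tm a R ` \<Gamma>))"
    unfolding SOS_def by (simp only: e mem_Collect_eq)
  also have "\<dots> \<longleftrightarrow> R \<in> SO \<and> (\<exists>a>0. Tm a R ` V = V)"
    using key by auto
  finally show ?thesis .
qed

lemma SOS_E: assumes "R \<in> SOS \<Gamma>" obtains a where "R \<in> SO" "a > 0" "Tm a R ` V = V"
  using assms unfolding SOS_char by blast

lemma SOS_SO: "R \<in> SOS \<Gamma> \<Longrightarrow> R \<in> SO"
  by (erule SOS_E)

lemma SOS_I: "R \<in> SO \<Longrightarrow> a > 0 \<Longrightarrow> Tm a R ` V = V \<Longrightarrow> R \<in> SOS \<Gamma>"
  unfolding SOS_char by blast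

lemma SOC_D: "R \<in> SOC \<Gamma> \<Longrightarrow> R \<in> SO" "R \<in> SOC \<Gamma> \<Longrightarrow> Tm 1 R ` V = V"
  unfolding SOC_char by simp_all

lemma SOC_I: "R \<in> SO \<Longrightarrow> Tm 1 R ` V = V \<Longrightarrow> R \<in> SOC \<Gamma>"
  unfolding SOC_char by simp

lemma rat_scale: assumes "q \<in> \<rat>" "q \<noteq> 0" shows "Tm q (mat 1) ` V = V"
proof
  show "Tm q (mat 1) ` V \<subseteq> V" using Qs_scale[OF zG _ assms(1)] by (auto simp: Tm_def)
  show "V \<subseteq> Tm q (mat 1) ` V"
  proof
    fix x assume x: "x \<in> V"
    have "(1 / q) *\<^sub>R x \<in> V" using Qs_scale[OF zG x] assms by simp
    moreover have "x = Tm q (mat 1) ((1 / q) *\<^sub>R x)" using assms(2) by (simp add: Tm_def)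
    ultimately show "x \<in> Tm q (mat 1) ` V" by blast
  qed
qed

lemma b_mem: "b i \<in> \<Gamma>" using G lattice_span_mem by simp

lemma sq_rat:
  assumes R: "R \<in> SO" and a: "a > 0" and g: "Tm a R ` V = V"
  shows "a * a \<in> \<rat>"
proof -
  obtain i0 :: 'n where True by simp
  define v where "v = b i0"
  have vG: "v \<in> \<Gamma>" using b_mem v_def by simp
  have v0: "v \<noteq> 0"
  proof
    assume "v = 0"
    then have "0 \<in> range b" unfolding v_def by (metis rangeI)
    then show False using indep dependent_zero by blast
  qed
  have vv: "v \<bullet> v \<in> \<rat>" "v \<bullet> v \<noteq> 0" using rat vG v0 by auto
  have "Tm a R v \<in> V" using g vG Qs_sub[OF zG] by blast
  then obtain n :: nat where n: "n > 0" "real n *\<^sub>R Tm a R v \<in> \<Gamma>" by (auto simp: Qs_def)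
  then have "(real n *\<^sub>R Tm a R v) \<bullet> (real n *\<^sub>R Tm a R v) \<in> \<rat>" using rat by blast
  also have "(real n *\<^sub>R Tm a R v) \<bullet> (real n *\<^sub>R Tm a R v) = (real n * real n) * (a * a) * (v \<bullet> v)"
    using R by (simp add: Tm_def orth_dot SO_def)
  finally have 1: "(real n * real n) * (a * a) * (v \<bullet> v) \<in> \<rat>" .
  have "((real n * real n) * (a * a) * (v \<bullet> v)) / ((real n * real n) * (v \<bullet> v)) \<in> \<rat>"
    by (rule Rats_divide[OF 1 Rats_mult[OF Rats_mult[OF Rats_of_nat Rats_of_nat] vv(1)]])
  also have "((real n * real n) * (a * a) * (v \<bullet> v)) / ((real n * real n) * (v \<bullet> v)) = a * a"
    using vv n by (simp add: field_simps)
  finally show ?thesis .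
qed

lemma pow_rat:
  assumes R: "R \<in> SO" and a: "a > 0" and g: "Tm a R ` V = V"
  shows "a ^ CARD('n) \<in> \<rat>"
proof -
  define B :: "real^'n^'n" where "B = (\<chi> i j. b j $ i)"
  have col: "columns B = range b"
    unfolding columns_def column_def B_def by (auto simp: vec_eq_iff)
  have "\<exists>C. B ** C = mat 1"
    using matrix_right_invertible_span_columns[of B] col spn by (simp add: span_vec_eq)
  then obtain C where "B ** C = mat 1" by blast
  then have "det B * det C = 1" by (metis det_mul det_I)
  then have dB: "det B \<noteq> 0" by auto
  have "\<forall>j. \<exists>m. (\<forall>k. m k \<in> \<rat>) \<and> Tm a R (b j) = (\<Sum>k\<in>UNIV. m k *\<^sub>R b k)"
  proof
    fix j
    have "Tm a R (b j) \<in> V" using g b_mem Qs_sub[OF zG] by blast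
    then obtain n :: nat where n: "n > 0" "real n *\<^sub>R Tm a R (b j) \<in> \<Gamma>" by (auto simp: Qs_def)
    then obtain k where k: "real n *\<^sub>R Tm a R (b j) = (\<Sum>i\<in>UNIV. of_int (k i) *\<^sub>R b i)"
      using G unfolding lattice_span_def by blast
    have "Tm a R (b j) = (1 / real n) *\<^sub>R (real n *\<^sub>R Tm a R (b j))" using n by simp
    also have "\<dots> = (\<Sum>i\<in>UNIV. (of_int (k i) / real n) *\<^sub>R b i)"
      unfolding k by (simp add: scaleR_sum_right)
    finally show "\<exists>m. (\<forall>k. m k \<in> \<rat>) \<and> Tm a R (b j) = (\<Sum>k\<in>UNIV. m k *\<^sub>R b k)"
      by (intro exI[of _ "\<lambda>i. of_int (k i) / real n"]) auto
  qed
  then obtain m where m: "\<And>j k. m j k \<in> \<rat>" "\<And>j. Tm a R (b j) = (\<Sum>k\<in>UNIV. m j k *\<^sub>R b k)"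
    by metis
  define M :: "real^'n^'n" where "M = (\<chi> k j. m j k)"
  have eq: "(a *\<^sub>R R) ** B = B ** M"
  proof (simp only: vec_eq_iff, intro allI)
    fix i j
    have "((a *\<^sub>R R) ** B) $ i $ j = (Tm a R (b j)) $ i"
      by (simp add: matrix_matrix_mult_def Tm_eq matrix_vector_mult_def B_def)
    also have "\<dots> = (\<Sum>k\<in>UNIV. m j k * b k $ i)" by (simp add: m(2) sum_component)
    also have "\<dots> = (B ** M) $ i $ j"
      by (simp add: matrix_matrix_mult_def B_def M_def mult.commute)
    finally show "((a *\<^sub>R R) ** B) $ i $ j = (B ** M) $ i $ j" .
  qed
  have "a ^ CARD('n) * det B = det B * det M"
    using arg_cong[OF eq, of det] R by (simp add: det_mul det_scaleR SO_def)
  then have "a ^ CARD('n) = det M" using dB by simp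
  also have "det M \<in> \<rat>" by (rule det_Rats) (simp add: M_def m(1))
  finally show ?thesis .
qed

lemma SOS_sq: assumes "R \<in> SOS \<Gamma>" shows "R ** R \<in> SOC \<Gamma>"
proof -
  obtain a where R: "R \<in> SO" and a: "a > 0" and g: "Tm a R ` V = V" using assms by (rule SOS_E)
  have aa: "a * a \<in> \<rat>" by (rule sq_rat[OF R a g])
  have e: "Tm 1 (R ** R) = (\<lambda>x. Tm (1 / (a * a)) (mat 1) ((\<lambda>y. Tm a R (Tm a R y)) x))"
    using a by (simp add: Tm_comp fun_eq_iff)
  have "Tm 1 (R ** R) ` V = V"
  proof -
    have "Tm (1 / (a * a)) (mat 1) ` V = V" using aa a by (intro rat_scale) auto
    then show ?thesis unfolding e by (rule img_comp[OF _ img_comp[OF g g]])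
  qed
  then show ?thesis by (rule SOC_I[OF SO_mul[OF R R]])
qed

lemma SOS_odd: assumes "odd CARD('n)" "R \<in> SOS \<Gamma>" shows "R \<in> SOC \<Gamma>"
proof -
  obtain a where R: "R \<in> SO" and a: "a > 0" and g: "Tm a R ` V = V" using assms(2) by (rule SOS_E)
  have aa: "a * a \<in> \<rat>" by (rule sq_rat[OF R a g])
  have ad: "a ^ CARD('n) \<in> \<rat>" by (rule pow_rat[OF R a g])
  obtain k where k: "CARD('n) = Suc (2 * k)" using assms(1) by (auto elim!: oddE)
  have "a ^ CARD('n) = a * (a * a) ^ k" unfolding k by (simp add: power_mult power2_eq_square)
  then have "a = a ^ CARD('n) / (a * a) ^ k" using a by simp
  moreover have "a ^ CARD('n) / (a * a) ^ k \<in> \<rat>" by (rule Rats_divide[OF ad Rats_power[OF aa]])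
  ultimately have arat: "a \<in> \<rat>" by simp
  have e: "Tm 1 R = (\<lambda>x. Tm (1 / a) (mat 1) (Tm a R x))"
    using a by (simp add: Tm_comp fun_eq_iff)
  have "Tm 1 R ` V = V"
  proof -
    have "Tm (1 / a) (mat 1) ` V = V" using arat a by (intro rat_scale) auto
    then show ?thesis unfolding e by (rule img_comp[OF _ g])
  qed
  then show ?thesis by (rule SOC_I[OF R])
qed

lemma SOS_carrier[simp]: "carrier (SOS_group \<Gamma>) = SOS \<Gamma>"
  and SOS_mult[simp]: "mult (SOS_group \<Gamma>) = (\<lambda>A B. A ** B)"
  and SOS_one[simp]: "one (SOS_group \<Gamma>) = mat 1"
  by (simp_all add: SOS_group_def)

lemma SOS_mul: assumes "R \<in> SOS \<Gamma>" "S \<in> SOS \<Gamma>" shows "R ** S \<in> SOS \<Gamma>"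
proof -
  obtain a where R: "R \<in> SO" and a: "a > 0" and g: "Tm a R ` V = V" using assms(1) by (rule SOS_E)
  obtain c where S: "S \<in> SO" and c: "c > 0" and h: "Tm c S ` V = V" using assms(2) by (rule SOS_E)
  have "Tm (a * c) (R ** S) = (\<lambda>x. Tm a R (Tm c S x))" by (simp add: Tm_comp fun_eq_iff)
  then have "Tm (a * c) (R ** S) ` V = V" using img_comp[OF g h] by simp
  then show ?thesis using a c by (intro SOS_I[OF SO_mul[OF R S]]) auto
qed

lemma SOS_tr: assumes "R \<in> SOS \<Gamma>" shows "transpose R \<in> SOS \<Gamma>"
proof -
  obtain a where R: "R \<in> SO" and a: "a > 0" and g: "Tm a R ` V = V" using assms by (rule SOS_E)
  have "Tm (1 / a) (transpose R) ` V = V" using img_inv[OF g Tm_inv[OF R]] a by simp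
  then show ?thesis using a by (intro SOS_I[OF SO_tr[OF R]]) auto
qed

lemma SOC_mul: assumes "R \<in> SOC \<Gamma>" "S \<in> SOC \<Gamma>" shows "R ** S \<in> SOC \<Gamma>"
proof -
  have R: "R \<in> SO" and g: "Tm 1 R ` V = V" using SOC_D[OF assms(1)] by auto
  have S: "S \<in> SO" and h: "Tm 1 S ` V = V" using SOC_D[OF assms(2)] by auto
  have "Tm 1 (R ** S) = (\<lambda>x. Tm 1 R (Tm 1 S x))" by (simp add: Tm_comp fun_eq_iff)
  then have "Tm 1 (R ** S) ` V = V" using img_comp[OF g h] by simp
  then show ?thesis by (rule SOC_I[OF SO_mul[OF R S]])
qed

lemma SOC_tr: assumes "R \<in> SOC \<Gamma>" shows "transpose R \<in> SOC \<Gamma>"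
proof -
  have R: "R \<in> SO" and g: "Tm 1 R ` V = V" using SOC_D[OF assms] by auto
  have "Tm (1 / 1) (transpose R) ` V = V" using img_inv[OF g Tm_inv[OF R]] by simp
  then show ?thesis by (intro SOC_I[OF SO_tr[OF R]]) simp
qed

lemma SOC_SOS: "R \<in> SOC \<Gamma> \<Longrightarrow> R \<in> SOS \<Gamma>"
  by (rule SOS_I[OF SOC_D(1) zero_less_one SOC_D(2)])

lemma one_SOC: "mat 1 \<in> SOC \<Gamma>"
proof -
  have "Tm 1 (mat 1 :: real^'n^'n) = (\<lambda>x. x)" by (simp add: Tm_id fun_eq_iff)
  then have "Tm 1 (mat 1 :: real^'n^'n) ` V = V" by simp
  then show ?thesis by (rule SOC_I[OF SO_one])
qed

lemma grp: "group (SOS_group \<Gamma>)"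
proof (rule groupI)
  fix x assume x: "x \<in> carrier (SOS_group \<Gamma>)"
  then have "transpose x \<in> carrier (SOS_group \<Gamma>)" "transpose x ** x = mat 1"
    using SOS_tr SO_transpose[OF SOS_SO] by auto
  then show "\<exists>y\<in>carrier (SOS_group \<Gamma>). y \<otimes>\<^bsub>SOS_group \<Gamma>\<^esub> x = \<one>\<^bsub>SOS_group \<Gamma>\<^esub>" by auto
qed (auto simp: SOS_mul SOC_SOS one_SOC matrix_mul_assoc)

lemma inv_SOS: "R \<in> SOS \<Gamma> \<Longrightarrow> inv\<^bsub>SOS_group \<Gamma>\<^esub> R = transpose R"
  using group.inv_equality[OF grp, of "transpose R" R] SOS_tr SO_transpose[OF SOS_SO] by auto

lemma normal_SOC: "SOC \<Gamma> \<lhd> SOS_group \<Gamma>"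
proof -
  have sg: "subgroup (SOC \<Gamma>) (SOS_group \<Gamma>)"
  proof (rule group.subgroupI[OF grp])
    show "SOC \<Gamma> \<subseteq> carrier (SOS_group \<Gamma>)" using SOC_SOS by auto
    show "SOC \<Gamma> \<noteq> {}" using one_SOC by auto
    show "inv\<^bsub>SOS_group \<Gamma>\<^esub> a \<in> SOC \<Gamma>" if "a \<in> SOC \<Gamma>" for a
      using that inv_SOS SOC_SOS SOC_tr by simp
    show "a \<otimes>\<^bsub>SOS_group \<Gamma>\<^esub> c \<in> SOC \<Gamma>" if "a \<in> SOC \<Gamma>" "c \<in> SOC \<Gamma>" for a c
      using that SOC_mul by simp
  qed
  have "x ** h ** transpose x \<in> SOC \<Gamma>" if x: "x \<in> SOS \<Gamma>" and h: "h \<in> SOC \<Gamma>" for x h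
  proof -
    obtain a where X: "x \<in> SO" and a: "a > 0" and g: "Tm a x ` V = V" using x by (rule SOS_E)
    have H: "h \<in> SO" and gh: "Tm 1 h ` V = V" using SOC_D[OF h] by auto
    have gi: "Tm (1 / a) (transpose x) ` V = V" using img_inv[OF g Tm_inv[OF X]] a by simp
    have "Tm 1 (x ** h ** transpose x) = (\<lambda>y. Tm a x ((\<lambda>z. Tm 1 h (Tm (1 / a) (transpose x) z)) y))"
      using a by (simp add: Tm_comp fun_eq_iff matrix_mul_assoc)
    then have "Tm 1 (x ** h ** transpose x) ` V = V"
      using img_comp[OF g img_comp[OF gh gi]] by simp
    then show ?thesis by (rule SOC_I[OF SO_mul[OF SO_mul[OF X H] SO_tr[OF X]]])
  qed
  then show ?thesis using group.normal_inv_iff[OF grp] sg inv_SOS by auto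
qed

lemma quot_sq:
  assumes X: "X \<in> carrier (SOS_group \<Gamma> Mod SOC \<Gamma>)"
  shows "X \<otimes>\<^bsub>SOS_group \<Gamma> Mod SOC \<Gamma>\<^esub> X = \<one>\<^bsub>SOS_group \<Gamma> Mod SOC \<Gamma>\<^esub>"
proof -
  obtain R where R: "R \<in> SOS \<Gamma>" and XR: "X = SOC \<Gamma> #>\<^bsub>SOS_group \<Gamma>\<^esub> R"
    using X by (auto simp: FactGroup_def RCOSETS_def)
  have "X \<otimes>\<^bsub>SOS_group \<Gamma> Mod SOC \<Gamma>\<^esub> X = SOC \<Gamma> #>\<^bsub>SOS_group \<Gamma>\<^esub> (R ** R)"
    using normal.rcos_sum[OF normal_SOC, of R R] R XR by (simp add: FactGroup_def)
  also have "\<dots> = SOC \<Gamma>"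
    using subgroup.rcos_const[OF normal.axioms(1)[OF normal_SOC] grp SOS_sq[OF R]] .
  finally show ?thesis by (simp add: FactGroup_def)
qed

lemma elab: "elementary_abelian_2 (SOS_group \<Gamma> Mod SOC \<Gamma>)"
  unfolding elementary_abelian_2_def
  using normal.factorgroup_is_group[OF normal_SOC] elab2_aux[OF normal.factorgroup_is_group[OF normal_SOC]] quot_sq
  by blast

end

theorem mainTheorem5:
  fixes \<Gamma> :: "(real^'n::finite) set"
  assumes "CARD('n) \<ge> 2"
    and "is_lattice \<Gamma>"
    and "\<forall>x\<in>\<Gamma>. x \<bullet> x \<in> \<rat>"
  shows "(even CARD('n) \<longrightarrow> elementary_abelian_2 (SOS_group \<Gamma> Mod SOC \<Gamma>))
       \<and> (odd CARD('n) \<longrightarrow> SOS \<Gamma> = SOC \<Gamma>)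
       \<and> (\<forall>R\<in>SOS \<Gamma>. R ** R \<in> SOC \<Gamma>)"
proof -
  obtain b :: "'n \<Rightarrow> real^'n" where "inj b" "independent (range b)" "span (range b) = UNIV"
    "\<Gamma> = lattice_span b" using assms(2) unfolding is_lattice_def by blast
  then interpret latt b \<Gamma> using assms(3) by unfold_locales auto
  show ?thesis using elab SOS_odd SOC_SOS SOS_sq by blast
qed


end
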